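(* A group $G$ is GCA-surjunctive if and only if $G$ is Hopfian and surjunctive.
   Context: For a finite set $A$ and a group $G$, $A^G$ is the set of functions $G\to A$ with shift action $(g\cdot x)(k):=x(g^{-1}k)$. For $\phi\in\mathrm{End}(G)$, a $\phi$-cellular automaton $A^G\to A^G$ is a map $\mathcal{T}$ for which there exist a finite $T\subseteq G$ and $\mu:A^T\to A$ with $\mathcal{T}(x)(h)=\mu((\phi(h^{-1})\cdot x)|_T)$ for all $x\in A^G,h\in G$; classical cellular automata are the $\mathrm{id}$-cellular automata. $\mathrm{GCA}(A^G)$ is the set of all $\phi$-cellular automata $A^G\to A^G$ over all $\phi\in\mathrm{End}(G)$. $G$ is surjunctive if for every finite set $A$, every injective classical cellular automaton $A^G\to A^G$ is surjective. $G$ is GCA-surjunctive if for every finite set $A$, every injective $\mathcal{T}\in\mathrm{GCA}(A^G)$ is surjective. $G$ is Hopfian if every surjective endomorphism of $G$ is injective. *)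

theory Defs
  imports "HOL-Algebra.Group"
begin

definition configs :: "('g, 'm) monoid_scheme \<Rightarrow> nat set \<Rightarrow> ('g \<Rightarrow> nat) set" where
  "configs G A = (carrier G \<rightarrow>\<^sub>E A)"

definition shift :: "('g, 'm) monoid_scheme \<Rightarrow> 'g \<Rightarrow> ('g \<Rightarrow> nat) \<Rightarrow> ('g \<Rightarrow> nat)" where
  "shift G g x = (\<lambda>k\<in>carrier G. x (inv\<^bsub>G\<^esub> g \<otimes>\<^bsub>G\<^esub> k))"

definition is_phi_CA ::
  "('g, 'm) monoid_scheme \<Rightarrow> nat set \<Rightarrow> ('g \<Rightarrow> 'g) \<Rightarrow> (('g \<Rightarrow> nat) \<Rightarrow> ('g \<Rightarrow> nat)) \<Rightarrow> bool" where
  "is_phi_CA G A \<phi> \<tau> \<longleftrightarrow>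
     (\<exists>T \<mu>. finite T \<and> T \<subseteq> carrier G \<and> \<mu> \<in> (T \<rightarrow>\<^sub>E A) \<rightarrow> A \<and>
        (\<forall>x\<in>configs G A. \<tau> x = (\<lambda>h\<in>carrier G. \<mu> (restrict (shift G (\<phi> (inv\<^bsub>G\<^esub> h)) x) T))))"

definition is_GCA :: "('g, 'm) monoid_scheme \<Rightarrow> nat set \<Rightarrow> (('g \<Rightarrow> nat) \<Rightarrow> ('g \<Rightarrow> nat)) \<Rightarrow> bool" where
  "is_GCA G A \<tau> \<longleftrightarrow> (\<exists>\<phi>\<in>hom G G. is_phi_CA G A \<phi> \<tau>)"

definition surjunctive :: "('g, 'm) monoid_scheme \<Rightarrow> bool" where
  "surjunctive G \<longleftrightarrow>
     (\<forall>A::nat set. finite A \<longrightarrow> (\<forall>\<tau>. is_phi_CA G A id \<tau> \<and> inj_on \<tau> (configs G A)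
        \<longrightarrow> \<tau> ` configs G A = configs G A))"

definition GCA_surjunctive :: "('g, 'm) monoid_scheme \<Rightarrow> bool" where
  "GCA_surjunctive G \<longleftrightarrow>
     (\<forall>A::nat set. finite A \<longrightarrow> (\<forall>\<tau>. is_GCA G A \<tau> \<and> inj_on \<tau> (configs G A)
        \<longrightarrow> \<tau> ` configs G A = configs G A))"

definition hopfian :: "('g, 'm) monoid_scheme \<Rightarrow> bool" where
  "hopfian G \<longleftrightarrow> (\<forall>\<phi>\<in>hom G G. \<phi> ` carrier G = carrier G \<longrightarrow> inj_on \<phi> (carrier G))"

end

theory Submission
  imports Defs
begin

lemma hom_inv_GG:
  assumes "group G" "\<phi> \<in> hom G G" "h \<in> carrier G"
  shows "\<phi> (inv\<^bsub>G\<^esub> h) = inv\<^bsub>G\<^esub> (\<phi> h)"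
proof -
  interpret group_hom G G \<phi>
    by (intro group_hom.intro group_hom_axioms.intro assms)
  show ?thesis using assms(3) by simp
qed

lemma shift_restrict_in:
  assumes "group G" "g \<in> carrier G" "x \<in> configs G A" "T \<subseteq> carrier G"
  shows "restrict (shift G g x) T \<in> T \<rightarrow>\<^sub>E A"
proof -
  have "\<And>t. t \<in> T \<Longrightarrow> shift G g x t \<in> A"
  proof -
    fix t assume "t \<in> T"
    hence t: "t \<in> carrier G" using assms by auto
    have "inv\<^bsub>G\<^esub> g \<otimes>\<^bsub>G\<^esub> t \<in> carrier G"
      using assms t by (simp add: group.inv_closed monoid.m_closed group.is_monoid)
    thus "shift G g x t \<in> A" using assms(3) t by (auto simp: shift_def configs_def)
  qed
  thus ?thesis by auto
qed

lemma configs_eqI: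
  assumes "x \<in> configs G A" "y \<in> configs G A" "\<And>k. k \<in> carrier G \<Longrightarrow> x k = y k"
  shows "x = y"
proof (rule extensionalityI[of _ "carrier G"])
  show "x \<in> extensional (carrier G)" using assms(1) by (simp add: configs_def PiE_def)
  show "y \<in> extensional (carrier G)" using assms(2) by (simp add: configs_def PiE_def)
qed (use assms(3) in auto)

lemma dir1:
  assumes grp: "group G" and S: "GCA_surjunctive G"
  shows "hopfian G"
  unfolding hopfian_def
proof (intro ballI impI, rule ccontr)
  fix \<phi> assume ph: "\<phi> \<in> hom G G" and su: "\<phi> ` carrier G = carrier G"
    and ni: "\<not> inj_on \<phi> (carrier G)"
  have phc: "\<And>h. h \<in> carrier G \<Longrightarrow> \<phi> h \<in> carrier G" using ph by (simp add: hom_in_carrier)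
  obtain a b where ab: "a \<in> carrier G" "b \<in> carrier G" "a \<noteq> b" "\<phi> a = \<phi> b"
    using ni unfolding inj_on_def by blast
  define A :: "nat set" where "A = {0,1}"
  define \<tau> where "\<tau> = (\<lambda>x::'a\<Rightarrow>nat. \<lambda>h\<in>carrier G. x (\<phi> h))"
  have one: "\<one>\<^bsub>G\<^esub> \<in> carrier G" using grp by (simp add: group.is_monoid monoid.one_closed)
  have ca: "is_phi_CA G A \<phi> \<tau>"
    unfolding is_phi_CA_def
  proof (intro exI[of _ "{\<one>\<^bsub>G\<^esub>}"] exI[of _ "\<lambda>f. f \<one>\<^bsub>G\<^esub>"] conjI ballI)
    show "(\<lambda>f. f \<one>\<^bsub>G\<^esub>) \<in> ({\<one>\<^bsub>G\<^esub>} \<rightarrow>\<^sub>E A) \<rightarrow> A" by auto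
    show "{\<one>\<^bsub>G\<^esub>} \<subseteq> carrier G" using one by simp
    fix x assume "x \<in> configs G A"
    show "\<tau> x = (\<lambda>h\<in>carrier G. restrict (shift G (\<phi> (inv\<^bsub>G\<^esub> h)) x) {\<one>\<^bsub>G\<^esub>} \<one>\<^bsub>G\<^esub>)"
    proof (rule ext)
      fix h show "\<tau> x h = (\<lambda>h\<in>carrier G. restrict (shift G (\<phi> (inv\<^bsub>G\<^esub> h)) x) {\<one>\<^bsub>G\<^esub>} \<one>\<^bsub>G\<^esub>) h"
      proof (cases "h \<in> carrier G")
        case True
        have "\<phi> (inv\<^bsub>G\<^esub> h) = inv\<^bsub>G\<^esub> (\<phi> h)" using hom_inv_GG[OF grp ph True] .
        moreover have "inv\<^bsub>G\<^esub> (inv\<^bsub>G\<^esub> (\<phi> h)) \<otimes>\<^bsub>G\<^esub> \<one>\<^bsub>G\<^esub> = \<phi> h"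
          using grp phc[OF True] by (simp add: group.inv_inv group.inv_closed group.is_monoid monoid.r_one)
        ultimately show ?thesis using True one by (simp add: \<tau>_def shift_def)
      qed (simp add: \<tau>_def)
    qed
  qed (simp)
  hence gca: "is_GCA G A \<tau>" using ph unfolding is_GCA_def by blast
  have inj: "inj_on \<tau> (configs G A)"
  proof (rule inj_onI)
    fix x y assume x: "x \<in> configs G A" and y: "y \<in> configs G A" and e: "\<tau> x = \<tau> y"
    show "x = y"
    proof (rule configs_eqI[OF x y])
      fix k assume "k \<in> carrier G"
      then obtain h where h: "h \<in> carrier G" "k = \<phi> h" using su by blast
      have "\<tau> x h = \<tau> y h" using e by simp
      thus "x k = y k" using h by (simp add: \<tau>_def)
    qed
  qed
  define z where "z = (\<lambda>k\<in>carrier G. if k = a then 1 else (0::nat))"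
  have zc: "z \<in> configs G A" by (auto simp: z_def configs_def A_def)
  have znot: "z \<notin> \<tau> ` configs G A"
  proof
    assume "z \<in> \<tau> ` configs G A"
    then obtain x where "z = \<tau> x" by blast
    hence "z a = x (\<phi> a)" "z b = x (\<phi> b)" using ab by (auto simp: \<tau>_def)
    thus False using ab by (simp add: z_def)
  qed
  moreover have "finite A" by (simp add: A_def)
  moreover have "\<forall>A::nat set. finite A \<longrightarrow> (\<forall>\<tau>. is_GCA G A \<tau> \<and> inj_on \<tau> (configs G A)
        \<longrightarrow> \<tau> ` configs G A = configs G A)" using S unfolding GCA_surjunctive_def .
  ultimately have "\<tau> ` configs G A = configs G A" using gca inj by simp
  thus False using zc znot by simp
qed

lemma id_hom: "id \<in> hom G G"
  unfolding hom_def by auto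

lemma dir2:
  assumes grp: "group G" and S: "GCA_surjunctive G"
  shows "surjunctive G"
  using S id_hom unfolding GCA_surjunctive_def surjunctive_def is_GCA_def by blast

lemma dir3:
  assumes grp: "group G" and H: "hopfian G" and S: "surjunctive G"
  shows "GCA_surjunctive G"
  unfolding GCA_surjunctive_def
proof (intro allI impI, elim conjE)
  fix A :: "nat set" and \<tau>
  assume fA: "finite A" and gca: "is_GCA G A \<tau>" and inj: "inj_on \<tau> (configs G A)"
  obtain \<phi> where ph: "\<phi> \<in> hom G G" and ca: "is_phi_CA G A \<phi> \<tau>" using gca unfolding is_GCA_def by blast
  have phc: "\<And>h. h \<in> carrier G \<Longrightarrow> \<phi> h \<in> carrier G" using ph by (simp add: hom_in_carrier)
  obtain T \<mu> where T: "finite T" "T \<subseteq> carrier G" and mu: "\<mu> \<in> (T \<rightarrow>\<^sub>E A) \<rightarrow> A"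
    and teq: "\<And>x. x \<in> configs G A \<Longrightarrow> \<tau> x = (\<lambda>h\<in>carrier G. \<mu> (restrict (shift G (\<phi> (inv\<^bsub>G\<^esub> h)) x) T))"
  proof -
    from ca obtain T \<mu> where H: "finite T \<and> T \<subseteq> carrier G \<and> \<mu> \<in> (T \<rightarrow>\<^sub>E A) \<rightarrow> A \<and>
        (\<forall>x\<in>configs G A. \<tau> x = (\<lambda>h\<in>carrier G. \<mu> (restrict (shift G (\<phi> (inv\<^bsub>G\<^esub> h)) x) T)))"
      unfolding is_phi_CA_def by (elim exE) 
    note h1 = conjunct1[OF H] and h2 = conjunct1[OF conjunct2[OF H]]
      and h3 = conjunct1[OF conjunct2[OF conjunct2[OF H]]] and h4 = conjunct2[OF conjunct2[OF conjunct2[OF H]]]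
    show ?thesis by (rule that[OF h1 h2 h3 bspec[OF h4]])
  qed
  define \<sigma> where "\<sigma> = (\<lambda>x. \<lambda>g\<in>carrier G. \<mu> (restrict (shift G (inv\<^bsub>G\<^esub> g) x) T))"
  define \<psi> where "\<psi> = (\<lambda>y::'a\<Rightarrow>nat. \<lambda>h\<in>carrier G. y (\<phi> h))"
  have sc: "\<sigma> x \<in> configs G A" if "x \<in> configs G A" for x
  proof -
    have "\<And>g. g \<in> carrier G \<Longrightarrow> \<mu> (restrict (shift G (inv\<^bsub>G\<^esub> g) x) T) \<in> A"
    proof -
      fix g assume g: "g \<in> carrier G"
      have "inv\<^bsub>G\<^esub> g \<in> carrier G" by (rule group.inv_closed[OF grp g])
      hence "restrict (shift G (inv\<^bsub>G\<^esub> g) x) T \<in> T \<rightarrow>\<^sub>E A"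
        by (rule shift_restrict_in[OF grp _ that T(2)])
      thus "\<mu> (restrict (shift G (inv\<^bsub>G\<^esub> g) x) T) \<in> A" by (rule funcset_mem[OF mu])
    qed
    thus ?thesis by (auto simp: \<sigma>_def configs_def)
  qed
  have tps: "\<tau> x = \<psi> (\<sigma> x)" if x: "x \<in> configs G A" for x
  proof (rule ext)
    fix h show "\<tau> x h = \<psi> (\<sigma> x) h"
    proof (cases "h \<in> carrier G")
      case True
      then show ?thesis using teq[OF x] phc[OF True] hom_inv_GG[OF grp ph True] by (simp add: \<psi>_def \<sigma>_def)
    qed (simp add: teq[OF x] \<psi>_def)
  qed
  have sca: "is_phi_CA G A id \<sigma>"
    unfolding is_phi_CA_def
    by (rule exI[of _ T], rule exI[of _ \<mu>]) (simp add: T mu \<sigma>_def)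
  have sinj: "inj_on \<sigma> (configs G A)"
  proof (rule inj_onI)
    fix x y assume x: "x \<in> configs G A" and y: "y \<in> configs G A" and e: "\<sigma> x = \<sigma> y"
    have "\<tau> x = \<tau> y" using tps[OF x] tps[OF y] e by simp
    thus "x = y" using inj_onD[OF inj _ x y] by simp
  qed
  have ssurj: "\<sigma> ` configs G A = configs G A"
  proof -
    have "\<forall>A::nat set. finite A \<longrightarrow> (\<forall>\<tau>. is_phi_CA G A id \<tau> \<and> inj_on \<tau> (configs G A)
        \<longrightarrow> \<tau> ` configs G A = configs G A)" using S unfolding surjunctive_def .
    thus ?thesis using fA sca sinj by simp
  qed
  have psc: "\<psi> y \<in> configs G A" if "y \<in> configs G A" for y
    using that phc by (auto simp: \<psi>_def configs_def)
  have tsub: "\<tau> ` configs G A \<subseteq> configs G A" using tps sc psc by auto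
  show "\<tau> ` configs G A = configs G A"
  proof (cases "\<exists>a b. a \<in> A \<and> b \<in> A \<and> a \<noteq> b")
    case False
    have "x = y" if "x \<in> configs G A" "y \<in> configs G A" for x y
    proof (rule configs_eqI[OF that])
      fix k assume "k \<in> carrier G"
      hence "x k \<in> A" "y k \<in> A" using that unfolding configs_def by auto
      thus "x k = y k" using False by blast
    qed
    hence eq: "\<And>x y. x \<in> configs G A \<Longrightarrow> y \<in> configs G A \<Longrightarrow> x = y" .
    show ?thesis
    proof (rule equalityI[OF tsub], rule subsetI)
      fix z assume z: "z \<in> configs G A"
      have "\<tau> z \<in> configs G A" using tsub z by blast
      hence "z = \<tau> z" using eq z by blast
      thus "z \<in> \<tau> ` configs G A" using z by blast
    qed
  next
    case True
    then obtain a b where ab: "a \<in> A" "b \<in> A" "a \<noteq> b" by blast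
    have phs: "\<phi> ` carrier G = carrier G"
    proof (rule ccontr)
      assume "\<phi> ` carrier G \<noteq> carrier G"
      moreover have "\<phi> ` carrier G \<subseteq> carrier G" using phc by (rule image_subsetI)
      ultimately obtain g where g: "g \<in> carrier G" "g \<notin> \<phi> ` carrier G" by (meson subsetI subset_antisym)
      define x where "x = (\<lambda>k\<in>carrier G. a)"
      define y where "y = x(g := b)"
      have xc: "x \<in> configs G A" using ab by (auto simp: x_def configs_def)
      have yc: "y \<in> configs G A" using ab g by (auto simp: x_def y_def configs_def)
      obtain x' where x': "x' \<in> configs G A" "x = \<sigma> x'" using xc ssurj by blast
      obtain y' where y': "y' \<in> configs G A" "y = \<sigma> y'" using yc ssurj by blast
      have "\<psi> x = \<psi> y" unfolding \<psi>_def y_def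
      proof (rule restrict_ext)
        fix h assume "h \<in> carrier G"
        hence "\<phi> h \<noteq> g" using g by blast
        thus "x (\<phi> h) = (x(g := b)) (\<phi> h)" by simp
      qed
      hence "\<tau> x' = \<tau> y'" using tps x' y' by simp
      hence "x' = y'" using inj x' y' unfolding inj_on_def by blast
      hence "x = y" using x' y' by simp
      hence "x g = y g" by simp
      thus False using g ab by (simp add: x_def y_def)
    qed
    have phi: "inj_on \<phi> (carrier G)" using H ph phs unfolding hopfian_def by blast
    show ?thesis
    proof (rule equalityI[OF tsub], rule subsetI)
      fix z assume z: "z \<in> configs G A"
      define y where "y = (\<lambda>g\<in>carrier G. z (the_inv_into (carrier G) \<phi> g))"
      have tin: "the_inv_into (carrier G) \<phi> g \<in> carrier G" if "g \<in> carrier G" for g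
        by (rule the_inv_into_into[OF phi]) (use that phs in auto)
      have yc: "y \<in> configs G A" using z tin by (auto simp: y_def configs_def)
      have "\<psi> y = z"
      proof (rule configs_eqI[OF psc[OF yc] z])
        fix k assume k: "k \<in> carrier G"
        show "\<psi> y k = z k" using k phc phi by (simp add: \<psi>_def y_def the_inv_into_f_f)
      qed
      obtain x where "x \<in> configs G A" "y = \<sigma> x" using yc ssurj by blast
      thus "z \<in> \<tau> ` configs G A" using tps \<open>\<psi> y = z\<close> by auto
    qed
  qed
qed

theorem proposition2p7:
  fixes G :: "('g, 'm) monoid_scheme"
  assumes "group G"
  shows "GCA_surjunctive G \<longleftrightarrow> hopfian G \<and> surjunctive G"
proof
  assume "GCA_surjunctive G" thus "hopfian G \<and> surjunctive G" using dir1[OF assms] dir2[OF assms] by simp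
next
  assume "hopfian G \<and> surjunctive G" thus "GCA_surjunctive G" using dir3[OF assms] by simp
qed

end
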